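(* Let $\psi$ be a convex function on a convex subset of a real vector space, with (sub)gradient $\nabla\psi$, which is $\eta$-exp-concave for some $\eta>0$ and satisfies $0\le\psi\le m$. Then for all $x,y$ in its domain, \[ \psi(x)-\psi(y)-\langle\nabla\psi|_y,x-y\rangle\ \ge\ \frac{|\psi(x)-\psi(y)|^2}{2m\vee(4/\eta)}. \]
   Context: $\psi$ is $\eta$-exp-concave if $e^{-\eta\psi}$ is concave. $a\vee b=\max(a,b)$. *)

theory Defs
  imports "HOL-Analysis.Analysis"
begin

text \<open>D assigns to each point y of C a (sub)gradient of f at y, given as a linear
  functional D y, so that the pairing of the gradient at y with x - y is D y (x - y).\<close>
definition subgradient_on :: "'a::real_vector set \<Rightarrow> ('a \<Rightarrow> real) \<Rightarrow> ('a \<Rightarrow> 'a \<Rightarrow> real) \<Rightarrow> bool" where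
  "subgradient_on C f D \<longleftrightarrow>
     (\<forall>y\<in>C. linear (D y) \<and> (\<forall>x\<in>C. f y + D y (x - y) \<le> f x))"

definition exp_concave_on :: "real \<Rightarrow> 'a::real_vector set \<Rightarrow> ('a \<Rightarrow> real) \<Rightarrow> bool" where
  "exp_concave_on \<eta> C f \<longleftrightarrow> concave_on C (\<lambda>x. exp (- \<eta> * f x))"

end

theory Submission
  imports Defs
begin

lemma pade_aux:
  fixes u :: real assumes "u \<ge> 0" shows "2 - u \<le> exp (-u) * (2 + u)"
proof -
  let ?p = "\<lambda>u::real. exp (-u) * (2 + u) - 2 + u"
  have "?p 0 \<le> ?p u"
  proof (rule DERIV_nonneg_imp_nondecreasing[OF assms])
    fix x :: real assume "0 \<le> x" "x \<le> u"
    have e: "1 + x \<le> exp x" by (rule exp_ge_add_one_self)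
    have "exp (-x) * (1 + x) \<le> exp (-x) * exp x"
      by (rule mult_left_mono[OF e]) simp
    moreover have "exp (-x) * exp x = 1" by (metis exp_minus_inverse mult.commute)
    ultimately have "exp (-x) * (1 + x) \<le> 1" by simp
    moreover have "(?p has_real_derivative (1 - exp (-x) * (1 + x))) (at x)"
      by (rule derivative_eq_intros refl | simp)+ (simp add: algebra_simps)
    ultimately show "\<exists>y. (?p has_real_derivative y) (at x) \<and> 0 \<le> y"
      by (intro exI[where x="1 - exp (-x) * (1 + x)"]) auto
  qed
  then show ?thesis by simp
qed

lemma exp_quad:
  fixes v :: real assumes "v \<ge> 0" shows "1 + v + v^2/2 \<le> exp v"
proof -
  let ?q = "\<lambda>v::real. exp v - 1 - v - v^2/2"
  have "?q 0 \<le> ?q v"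
  proof (rule DERIV_nonneg_imp_nondecreasing[OF assms])
    fix x :: real assume "0 \<le> x" "x \<le> v"
    have e: "1 + x \<le> exp x" by (rule exp_ge_add_one_self)
    then have n: "0 \<le> exp x - 1 - x" by linarith
    have "(?q has_real_derivative (exp x - 1 - x)) (at x)"
      by (rule derivative_eq_intros refl | simp)+
    with n show "\<exists>y. (?q has_real_derivative y) (at x) \<and> 0 \<le> y" by blast
  qed
  then show ?thesis by simp
qed

lemma key_ineq:
  fixes u c :: real assumes "c \<ge> 4" "u \<le> c / 2"
  shows "u^2 / c \<le> exp (-u) - 1 + u"
proof (cases "u \<ge> 0")
  case True
  have "u^2 / c \<le> u^2 / (2 + u)"
    using True assms by (intro divide_left_mono) auto
  also have "u^2 / (2 + u) \<le> exp (-u) - 1 + u"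
  proof -
    have "2 - u \<le> exp (-u) * (2 + u)" by (rule pade_aux[OF True])
    then have "u^2 \<le> (exp (-u) - 1 + u) * (2 + u)" by (simp add: algebra_simps power2_eq_square)
    then show ?thesis using True by (simp add: divide_le_eq)
  qed
  finally show ?thesis .
next
  case False
  have "u^2 / c \<le> u^2 / 2" using assms by (intro divide_left_mono) auto
  also have "\<dots> \<le> exp (-u) - 1 + u" using exp_quad[of "-u"] False by simp
  finally show ?thesis .
qed

lemma slope_bound:
  fixes w q :: real
  assumes "\<And>t. 0 < t \<Longrightarrow> t < 1 \<Longrightarrow> 1 - t + t * q \<le> exp (t * w)"
  shows "q - 1 \<le> w"
proof -
  have d: "((\<lambda>t. exp (t * w)) has_real_derivative w) (at 0 within {0<..})"
    by (rule derivative_eq_intros refl | simp)+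
  then have lim: "((\<lambda>t. (exp (t * w) - exp (0 * w)) / (t - 0)) \<longlongrightarrow> w) (at_right 0)"
    by (simp add: has_field_derivative_iff)
  have ev: "\<forall>\<^sub>F t in at_right (0::real). q - 1 \<le> (exp (t * w) - exp (0 * w)) / (t - 0)"
    using eventually_at_right_real[OF zero_less_one]
  proof (rule eventually_mono)
    fix t :: real assume "t \<in> {0<..<1}"
    then have t: "0 < t" "t < 1" by auto
    have "t * (q - 1) \<le> exp (t * w) - 1" using assms[OF t] by (simp add: algebra_simps)
    then show "q - 1 \<le> (exp (t * w) - exp (0 * w)) / (t - 0)"
      using t by (simp add: le_divide_eq mult.commute)
  qed
  show ?thesis
    by (rule tendsto_lowerbound[OF lim ev]) simp
qed

theorem proposition4:
  fixes C :: "'a::real_vector set" and \<psi> :: "'a \<Rightarrow> real"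
    and D :: "'a \<Rightarrow> 'a \<Rightarrow> real" and \<eta> m :: real
  assumes "convex C"
    and "convex_on C \<psi>"
    and "subgradient_on C \<psi> D"
    and "\<eta> > 0"
    and "exp_concave_on \<eta> C \<psi>"
    and "\<And>x. x \<in> C \<Longrightarrow> 0 \<le> \<psi> x \<and> \<psi> x \<le> m"
    and "x \<in> C" and "y \<in> C"
  shows "\<psi> x - \<psi> y - D y (x - y) \<ge> \<bar>\<psi> x - \<psi> y\<bar>^2 / max (2 * m) (4 / \<eta>)"
proof -
  define a where "a = \<psi> x"
  define b where "b = \<psi> y"
  define g where "g = D y (x - y)"
  define d where "d = a - b"
  define u where "u = \<eta> * d"
  define M where "M = max (2 * m) (4 / \<eta>)"
  define c where "c = \<eta> * M"
  have lin: "linear (D y)" and sub: "\<And>z. z \<in> C \<Longrightarrow> \<psi> y + D y (z - y) \<le> \<psi> z"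
    using assms(3,8) unfolding subgradient_on_def by auto
  have conc: "convex_on C (\<lambda>z. - exp (- \<eta> * \<psi> z))"
    using assms(5) unfolding exp_concave_on_def concave_on_def .
  have step: "1 - t + t * exp (- u) \<le> exp (t * (- \<eta> * g))" if t: "0 < t" "t < 1" for t
  proof -
    define z where "z = (1 - t) *\<^sub>R y + t *\<^sub>R x"
    have zC: "z \<in> C" unfolding z_def using assms(1,7,8) t by (intro convexD) auto
    have "z - y = t *\<^sub>R (x - y)" unfolding z_def by (simp add: algebra_simps)
    then have "D y (z - y) = t * g" unfolding g_def using linear_scale[OF lin] by simp
    then have lb: "b + t * g \<le> \<psi> z" using sub[OF zC] unfolding b_def by simp
    have "- exp (- \<eta> * \<psi> z) \<le> (1 - t) * (- exp (- \<eta> * b)) + t * (- exp (- \<eta> * a))"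
      unfolding z_def a_def b_def using convex_onD[OF conc, of t y x] t assms(7,8) by simp
    then have "(1 - t) * exp (- \<eta> * b) + t * exp (- \<eta> * a) \<le> exp (- \<eta> * \<psi> z)" by simp
    also have "\<dots> \<le> exp (- \<eta> * (b + t * g))"
      using lb assms(4) by simp
    finally have *: "(1 - t) * exp (- \<eta> * b) + t * exp (- \<eta> * a) \<le> exp (- \<eta> * b) * exp (t * (- \<eta> * g))"
      by (simp add: exp_add[symmetric] algebra_simps)
    have ea: "exp (- \<eta> * a) = exp (- \<eta> * b) * exp (- u)"
      unfolding u_def d_def by (simp add: exp_add[symmetric] algebra_simps)
    have "exp (- \<eta> * b) * (1 - t + t * exp (- u)) \<le> exp (- \<eta> * b) * exp (t * (- \<eta> * g))"
      using * unfolding ea by (simp add: algebra_simps)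
    then show ?thesis by simp
  qed
  have gb: "exp (- u) - 1 \<le> - \<eta> * g" by (rule slope_bound[OF step])
  have c4: "c \<ge> 4" and c2: "c \<ge> 2 * \<eta> * m"
    unfolding c_def M_def using assms(4) by (auto simp: max_def field_simps)
  have "\<psi> x \<le> m" "0 \<le> \<psi> y" using assms(6,7,8) by auto
  then have "d \<le> m" unfolding d_def a_def b_def by simp
  then have "\<eta> * d \<le> \<eta> * m" using assms(4) by (simp add: mult_left_mono)
  then have "u \<le> c / 2" using c2 unfolding u_def by linarith
  then have k: "u^2 / c \<le> exp (- u) - 1 + u" using key_ineq c4 by blast
  have "0 < 4 / \<eta>" using assms(4) by simp
  then have Mpos: "M > 0" unfolding M_def by linarith
  have "\<bar>d\<bar>^2 / M = (u^2 / c) / \<eta>"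
    unfolding u_def c_def using assms(4) by (simp add: power_mult_distrib field_simps power2_eq_square)
  also have "\<dots> \<le> (exp (- u) - 1 + u) / \<eta>" using divide_right_mono[OF k, of \<eta>] assms(4) by simp
  also have "\<dots> \<le> d - g"
    using gb assms(4) unfolding u_def by (simp add: field_simps)
  finally show ?thesis unfolding d_def a_def b_def g_def M_def by simp
qed

end
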